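(* Let $n\neq 1$ be a real number, $k_n=n-1$, and $k_0,k_1,k_2\in\mathbb{R}$. On the phase space with canonical coordinates $(r,\phi,p_r,p_\phi)$, $r>0$, consider $$H_{na}'=\tfrac12 r^{2n}\Big(p_r^2+\tfrac{p_\phi^2}{r^2}\Big)+\frac{k_0}{r^{2k_n}}+\frac{1}{r^{k_n}}\big(k_1\cos(k_n\phi)+k_2\sin(k_n\phi)\big).$$ With $P_1=r^n\big(p_r\cos(k_n\phi)+\tfrac1r p_\phi\sin(k_n\phi)\big)$ and $P_2=r^n\big(p_r\sin(k_n\phi)-\tfrac1r p_\phi\cos(k_n\phi)\big)$, the function $$J_{a3}'=2k_0p_\phi+k_2P_1-k_1P_2,$$ which is linear in the momenta, is a constant of motion of $H_{na}'$, i.e. $\{J_{a3}',H_{na}'\}=0$.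
   Context: The Poisson bracket is the canonical one in $(r,\phi,p_r,p_\phi)$. A constant of motion of $H$ is a function $F$ with $\{F,H\}=0$. *)

theory Defs
  imports "HOL-Analysis.Analysis"
begin

type_synonym phase_fun = "real \<Rightarrow> real \<Rightarrow> real \<Rightarrow> real \<Rightarrow> real"
  (* arguments in the order r, phi, p_r, p_phi *)

definition pd_r :: "phase_fun \<Rightarrow> phase_fun" where
  "pd_r F r ph pr pph = deriv (\<lambda>x. F x ph pr pph) r"
definition pd_phi :: "phase_fun \<Rightarrow> phase_fun" where
  "pd_phi F r ph pr pph = deriv (\<lambda>x. F r x pr pph) ph"
definition pd_pr :: "phase_fun \<Rightarrow> phase_fun" where
  "pd_pr F r ph pr pph = deriv (\<lambda>x. F r ph x pph) pr"
definition pd_pphi :: "phase_fun \<Rightarrow> phase_fun" where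
  "pd_pphi F r ph pr pph = deriv (\<lambda>x. F r ph pr x) pph"

definition poisson :: "phase_fun \<Rightarrow> phase_fun \<Rightarrow> phase_fun" where
  "poisson F G r ph pr pph =
     pd_r F r ph pr pph * pd_pr G r ph pr pph - pd_pr F r ph pr pph * pd_r G r ph pr pph
   + pd_phi F r ph pr pph * pd_pphi G r ph pr pph - pd_pphi F r ph pr pph * pd_phi G r ph pr pph"

definition H_na :: "real \<Rightarrow> real \<Rightarrow> real \<Rightarrow> real \<Rightarrow> phase_fun" where
  "H_na n k0 k1 k2 r ph pr pph =
     1/2 * r powr (2*n) * (pr^2 + pph^2 / r^2) + k0 / r powr (2*(n-1))
     + (1 / r powr (n-1)) * (k1 * cos ((n-1)*ph) + k2 * sin ((n-1)*ph))"

definition P1 :: "real \<Rightarrow> phase_fun" where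
  "P1 n r ph pr pph = r powr n * (pr * cos ((n-1)*ph) + (1/r) * pph * sin ((n-1)*ph))"

definition P2 :: "real \<Rightarrow> phase_fun" where
  "P2 n r ph pr pph = r powr n * (pr * sin ((n-1)*ph) - (1/r) * pph * cos ((n-1)*ph))"

definition J_a3 :: "real \<Rightarrow> real \<Rightarrow> real \<Rightarrow> real \<Rightarrow> phase_fun" where
  "J_a3 n k0 k1 k2 r ph pr pph = 2*k0*pph + k2 * P1 n r ph pr pph - k1 * P2 n r ph pr pph"

end

theory Submission imports Defs begin

lemma pw:
  fixes r n :: real assumes r: "r > 0"
  shows "r powr (2 * n) = (r powr n)^2" "r powr (2 * (n-1)) = (r powr n)^2/r^2"
    "r powr (n-1) = r powr n / r" "r powr (2 * n-1) = (r powr n)^2/r"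
    "r powr (2 * (n-1)-1) = (r powr n)^2/r^3" "r powr (n-1-1) = r powr n / r^2"
    "r powr (2*n-3) = (r powr n)^2/r^3" "r powr (2*n-2) = (r powr n)^2/r^2" "r powr (n-2) = r powr n / r^2"
  using r by (simp_all add: powr_diff powr_add[symmetric] power2_eq_square power3_eq_cube
     powr_mult_base algebra_simps flip: powr_add)

lemma dJr: assumes r: "r > 0"
  shows "pd_r (J_a3 n k0 k1 k2) r ph pr pph =
   k2 * (n * (r powr n)/r * (pr * cos((n-1) * ph) + pph * sin((n-1) * ph)/r) - (r powr n) * pph * sin((n-1) * ph)/r^2)
  - k1 * (n * (r powr n)/r * (pr * sin((n-1) * ph) - pph * cos((n-1) * ph)/r) + (r powr n) * pph * cos((n-1) * ph)/r^2)"
  unfolding pd_r_def J_a3_def P1_def P2_def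
  apply (rule DERIV_imp_deriv)
  using r apply (auto intro!: derivative_eq_intros simp: pw)
  using r apply (auto simp: field_simps power2_eq_square power3_eq_cube)
  done

lemma dJphi: assumes r: "r > 0"
  shows "pd_phi (J_a3 n k0 k1 k2) r ph pr pph =
   k2 * (r powr n) * (n-1) * (pph * cos((n-1) * ph)/r - pr * sin((n-1) * ph)) - k1 * (r powr n) * (n-1) * (pr * cos((n-1) * ph) + pph * sin((n-1) * ph)/r)"
  unfolding pd_phi_def J_a3_def P1_def P2_def
  apply (rule DERIV_imp_deriv)
  using r apply (auto intro!: derivative_eq_intros simp: field_simps)
  done

lemma dJpr:
  shows "pd_pr (J_a3 n k0 k1 k2) r ph pr pph = (r powr n) * (k2 * cos((n-1) * ph) - k1 * sin((n-1) * ph))"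
  unfolding pd_pr_def J_a3_def P1_def P2_def
  apply (rule DERIV_imp_deriv)
  apply (auto intro!: derivative_eq_intros simp: field_simps)
  done

lemma dJpphi: assumes r: "r > 0"
  shows "pd_pphi (J_a3 n k0 k1 k2) r ph pr pph = 2 * k0 + (r powr n) * (k2 * sin((n-1) * ph) + k1 * cos((n-1) * ph))/r"
  unfolding pd_pphi_def J_a3_def P1_def P2_def
  apply (rule DERIV_imp_deriv)
  using r apply (auto intro!: derivative_eq_intros simp: field_simps)
  done

lemma dHr: assumes r: "r > 0"
  shows "pd_r (H_na n k0 k1 k2) r ph pr pph =
   n * (r powr n)^2/r * (pr^2 + pph^2/r^2) - (r powr n)^2 * pph^2/r^3 - 2 * (n-1) * k0 * r/(r powr n)^2
   - (n-1)/(r powr n) * (k1 * cos((n-1) * ph) + k2 * sin((n-1) * ph))"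
  unfolding pd_r_def H_na_def
  apply (rule DERIV_imp_deriv)
  using r apply (auto intro!: derivative_eq_intros)
  using r apply (simp add: pw)
  using r apply (simp add: field_simps power2_eq_square power3_eq_cube eval_nat_numeral)
  done

lemma dHphi: assumes r: "r > 0"
  shows "pd_phi (H_na n k0 k1 k2) r ph pr pph = r/(r powr n) * (n-1) * (k2 * cos((n-1) * ph) - k1 * sin((n-1) * ph))"
  unfolding pd_phi_def H_na_def
  apply (rule DERIV_imp_deriv)
  using r apply (auto intro!: derivative_eq_intros simp: pw)
  using r apply (auto simp: field_simps power2_eq_square power3_eq_cube)
  done

lemma dHpr: assumes r: "r > 0"
  shows "pd_pr (H_na n k0 k1 k2) r ph pr pph = (r powr n)^2 * pr"
  unfolding pd_pr_def H_na_def
  apply (rule DERIV_imp_deriv)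
  using r apply (auto intro!: derivative_eq_intros simp: pw)
  done

lemma dHpphi: assumes r: "r > 0"
  shows "pd_pphi (H_na n k0 k1 k2) r ph pr pph = (r powr n)^2 * pph/r^2"
  unfolding pd_pphi_def H_na_def
  apply (rule DERIV_imp_deriv)
  using r apply (auto intro!: derivative_eq_intros simp: pw)
  using r apply (auto simp: field_simps power2_eq_square power3_eq_cube eval_nat_numeral)
  done

theorem mainTheorem3:
  fixes n k0 k1 k2 :: real
  assumes "n \<noteq> 1"
  shows "\<forall>r ph pr pph. r > 0 \<longrightarrow> poisson (J_a3 n k0 k1 k2) (H_na n k0 k1 k2) r ph pr pph = 0"
proof (intro allI impI)
  fix r ph pr pph :: real assume r: "r > 0"
  have R: "r powr n > 0" using r by simp
  show "poisson (J_a3 n k0 k1 k2) (H_na n k0 k1 k2) r ph pr pph = 0"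
    unfolding poisson_def dJr[OF r] dJphi[OF r] dJpr dJpphi[OF r] dHr[OF r] dHphi[OF r] dHpr[OF r] dHpphi[OF r]
    using r R by (simp add: field_simps power2_eq_square power3_eq_cube)
qed
end
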